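(* Let $r,n,\delta\ge 2$ be natural numbers, let $m := \max\{\binom{rn-1}{r-1}n^2, \delta\}$ and $N := \binom{m-1}{n-1}$. Let $G$ be the graph with vertices $v_{i,j,k}$ for $i\in[n]$, $j\in[N]$, $k\in[m]$, and vertices $s_{i,X}$ for $i\in[n]$ and $X\subseteq[m]$ with $|X|=n$, whose edges are: $v_{i,j,k}v_{i',j',k'}$ whenever $i\neq i'$ and $k=k'$; and $s_{i,X}v_{i,j,k}$ whenever $k\in X$ (for all $j\in[N]$). Then $\chi(G)=n$.
   Context: $[t]=\{1,\dots,t\}$. There are no other edges in $G$ than those listed. $\chi$ denotes the chromatic number. *)

theory Defs
  imports Main
begin

(* Simple graphs given by a finite vertex set V and a symmetric edge relation E. *)

definition proper_colouring :: "'a set \<Rightarrow> ('a \<Rightarrow> 'a \<Rightarrow> bool) \<Rightarrow> nat \<Rightarrow> ('a \<Rightarrow> nat) \<Rightarrow> bool" where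
  "proper_colouring V E c f \<longleftrightarrow>
     (\<forall>x\<in>V. f x < c) \<and> (\<forall>x\<in>V. \<forall>y\<in>V. E x y \<longrightarrow> f x \<noteq> f y)"

definition chromatic_number :: "'a set \<Rightarrow> ('a \<Rightarrow> 'a \<Rightarrow> bool) \<Rightarrow> nat" where
  "chromatic_number V E = (LEAST c. \<exists>f. proper_colouring V E c f)"

datatype vtx = Vv nat nat nat | Sv nat "nat set"

definition par_m :: "nat \<Rightarrow> nat \<Rightarrow> nat \<Rightarrow> nat" where
  "par_m r n \<delta> = max (((r * n - 1) choose (r - 1)) * n ^ 2) \<delta>"

definition par_N :: "nat \<Rightarrow> nat \<Rightarrow> nat \<Rightarrow> nat" where
  "par_N r n \<delta> = (par_m r n \<delta> - 1) choose (n - 1)"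

definition G_verts :: "nat \<Rightarrow> nat \<Rightarrow> nat \<Rightarrow> vtx set" where
  "G_verts n N m =
     {Vv i j k | i j k. i \<in> {1..n} \<and> j \<in> {1..N} \<and> k \<in> {1..m}}
     \<union> {Sv i X | i X. i \<in> {1..n} \<and> X \<subseteq> {1..m} \<and> card X = n}"

definition G_edge0 :: "nat \<Rightarrow> nat \<Rightarrow> nat \<Rightarrow> vtx \<Rightarrow> vtx \<Rightarrow> bool" where
  "G_edge0 n N m x y \<longleftrightarrow>
     (\<exists>i j k i' j' k'. x = Vv i j k \<and> y = Vv i' j' k' \<and> i \<noteq> i' \<and> k = k') \<or>
     (\<exists>i X j k. x = Sv i X \<and> y = Vv i j k \<and> k \<in> X)"

definition G_edge :: "nat \<Rightarrow> nat \<Rightarrow> nat \<Rightarrow> vtx \<Rightarrow> vtx \<Rightarrow> bool" where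
  "G_edge n N m x y \<longleftrightarrow> x \<in> G_verts n N m \<and> y \<in> G_verts n N m \<and>
     (G_edge0 n N m x y \<or> G_edge0 n N m y x)"

end

theory Submission
  imports Defs
begin

lemma m_ge: assumes "r \<ge> 2" "n \<ge> 2" shows "n \<le> par_m r n \<delta>"
proof -
  have "(r * n - 1) choose (r - 1) > 0"
  proof (rule zero_less_binomial)
    have "r * 1 \<le> r * n" using assms by (intro mult_le_mono2) auto
    thus "r - 1 \<le> r * n - 1" by (simp only: mult_1_right diff_le_mono)
  qed
  hence "1 * n ^ 2 \<le> ((r * n - 1) choose (r - 1)) * n ^ 2"
    by (intro mult_le_mono1) (simp only: Suc_le_eq One_nat_def)
  hence "n ^ 2 \<le> ((r * n - 1) choose (r - 1)) * n ^ 2" by simp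
  moreover have "n \<le> n ^ 2" by (simp add: power2_eq_square)
  ultimately show ?thesis unfolding par_m_def by linarith
qed

theorem lemma2p2:
  fixes r n \<delta> :: nat
  assumes "r \<ge> 2" and "n \<ge> 2" and "\<delta> \<ge> 2"
  shows "chromatic_number (G_verts n (par_N r n \<delta>) (par_m r n \<delta>))
           (G_edge n (par_N r n \<delta>) (par_m r n \<delta>)) = n"
proof -
  let ?N = "par_N r n \<delta>" and ?m = "par_m r n \<delta>"
  let ?V = "G_verts n ?N ?m" and ?E = "G_edge n ?N ?m"
  have nm: "n \<le> ?m" using m_ge assms by blast
  have N1: "1 \<le> ?N" unfolding par_N_def using nm assms
    by (simp add: Suc_le_eq zero_less_binomial)
  have m1: "1 \<le> ?m" using nm assms by simp
  define f where "f x = (case x of Vv i j k \<Rightarrow> i - 1 | Sv i X \<Rightarrow> i mod n)" for x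
  have up: "proper_colouring ?V ?E n f"
    unfolding proper_colouring_def
  proof (intro conjI ballI impI)
    fix x assume "x \<in> ?V"
    then show "f x < n" using assms unfolding G_verts_def f_def by auto
  next
    fix x y assume x: "x \<in> ?V" and y: "y \<in> ?V" and e: "?E x y"
    have key: "i mod n \<noteq> i - 1" if "i \<in> {1..n}" for i
    proof (cases "i = n")
      case True then show ?thesis using assms by simp
    next
      case False then show ?thesis using that by auto
    qed
    show "f x \<noteq> f y"
      using e x y key unfolding G_edge_def G_edge0_def G_verts_def f_def
      by (auto split: vtx.splits) (metis)+
  qed
  have low: "n \<le> c" if "proper_colouring ?V ?E c g" for c g
  proof -
    have vin: "Vv i 1 1 \<in> ?V" if "i \<in> {1..n}" for i
      using that N1 m1 unfolding G_verts_def by auto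
    have inj: "inj_on (\<lambda>i. g (Vv i 1 1)) {1..n}"
    proof (rule inj_onI)
      fix i i' assume i: "i \<in> {1..n}" and i': "i' \<in> {1..n}"
        and eq: "g (Vv i 1 1) = g (Vv i' 1 1)"
      show "i = i'"
      proof (rule ccontr)
        assume "i \<noteq> i'"
        hence "?E (Vv i 1 1) (Vv i' 1 1)"
          using vin i i' unfolding G_edge_def G_edge0_def by blast
        thus False using that vin i i' eq unfolding proper_colouring_def by blast
      qed
    qed
    have "(\<lambda>i. g (Vv i 1 1)) ` {1..n} \<subseteq> {..<c}"
      using that vin unfolding proper_colouring_def by auto
    from card_inj_on_le[OF inj this] show ?thesis by simp
  qed
  show ?thesis unfolding chromatic_number_def
    by (rule Least_equality) (use up low in auto)
qed

end
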